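(* Let $(X,\Sigma)$ be a measurable space and $\boldsymbol{\mu}=(\mu_t)_{t\ge0}$ a family of monotone measures on $\Sigma$ such that $\mu_t$ is continuous from below for every $t>0$. For $t\ge0$ and $E\in\Sigma\setminus\{\emptyset\}$ define $\mathsf{A}_t(f|E)=\sup\{a\in[0,\infty)\colon \{x\in E\colon f(x)<a\}\in\mathcal{N}_{\mu_t}\}$ for $f\in\mathbf{F}$, and $\mathsf{A}_t(\cdot|\emptyset)=\infty$. Then for every $t>0$ and every $f\in\mathbf{F}\setminus\{0_X\}$, $$\sup\{\mu_t(E)\colon \mathsf{A}_t(f|E)\ge t,\ E\in\Sigma\}=\mu_t(\{x\in X\colon f(x)\ge t\}).$$
   Context: $0_X$ is the zero function on $X$. $\mathbf{F}$ denotes the set of all $\Sigma$-measurable, nonnegative, bounded functions $f\colon X\to[0,\infty)$. A monotone measure is a map $\mu\colon\Sigma\to[0,\infty]$ with $\mu(B)\le\mu(C)$ whenever $B\subseteq C$, $\mu(\emptyset)=0$ and $\mu(X)>0$; it is continuous from below if $\mu(\bigcup_n E_n)=\lim_n\mu(E_n)$ for every nondecreasing sequence $E_1\subseteq E_2\subseteq\cdots$ in $\Sigma$. For a monotone measure $\mu$, $\mathcal{N}_\mu$ is the set of null sets: $N\in\mathcal{N}_\mu$ iff $N\in\Sigma$ and $\mu(E\cup N)=\mu(E)$ for every $E\in\Sigma$. Thus $\mathsf{A}_t(f|E)$ is the essential infimum of $f$ on $E$ with respect to $\mu_t$. *)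

theory Defs
  imports "HOL-Analysis.Analysis"
begin

text \<open>Measurable space (X, Sigma) is represented by a measure M via space M and sets M;
  only its sigma-algebra is used.\<close>

definition monotone_measure :: "'a measure \<Rightarrow> ('a set \<Rightarrow> ennreal) \<Rightarrow> bool" where
  "monotone_measure M \<mu> \<longleftrightarrow>
     (\<forall>B\<in>sets M. \<forall>C\<in>sets M. B \<subseteq> C \<longrightarrow> \<mu> B \<le> \<mu> C) \<and>
     \<mu> {} = 0 \<and> \<mu> (space M) > 0"

definition continuous_from_below :: "'a measure \<Rightarrow> ('a set \<Rightarrow> ennreal) \<Rightarrow> bool" where
  "continuous_from_below M \<mu> \<longleftrightarrow>
     (\<forall>E :: nat \<Rightarrow> 'a set. range E \<subseteq> sets M \<longrightarrow> incseq E \<longrightarrow>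
        (\<lambda>n. \<mu> (E n)) \<longlonglongrightarrow> \<mu> (\<Union>n. E n))"

definition null_sets_mm :: "'a measure \<Rightarrow> ('a set \<Rightarrow> ennreal) \<Rightarrow> 'a set set" where
  "null_sets_mm M \<mu> = {N \<in> sets M. \<forall>E\<in>sets M. \<mu> (E \<union> N) = \<mu> E}"

definition F_class :: "'a measure \<Rightarrow> ('a \<Rightarrow> real) set" where
  "F_class M = {f. f \<in> borel_measurable M \<and> (\<forall>x\<in>space M. 0 \<le> f x) \<and>
                   (\<exists>B. \<forall>x\<in>space M. f x \<le> B)}"

definition ess_A :: "'a measure \<Rightarrow> ('a set \<Rightarrow> ennreal) \<Rightarrow> ('a \<Rightarrow> real) \<Rightarrow> 'a set \<Rightarrow> ennreal" where
  "ess_A M \<mu> f E = (if E = {} then \<infinity> else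
     Sup {ennreal a | a. 0 \<le> a \<and> {x\<in>E. f x < a} \<in> null_sets_mm M \<mu>})"

end

theory Submission
  imports Defs
begin

lemma null_sub:
  assumes m: "monotone_measure M m" and N: "N \<in> null_sets_mm M m"
    and N': "N' \<in> sets M" "N' \<subseteq> N"
  shows "N' \<in> null_sets_mm M m"
  unfolding null_sets_mm_def
proof (intro CollectI conjI ballI N')
  fix E assume E: "E \<in> sets M"
  have NM: "N \<in> sets M" using N by (simp add: null_sets_mm_def)
  have "m (E \<union> N') \<le> m (E \<union> N)"
    using m E N' NM unfolding monotone_measure_def by (meson Un_mono order_refl sets.Un)
  also have "\<dots> = m E" using N E by (simp add: null_sets_mm_def)
  finally have 1: "m (E \<union> N') \<le> m E" .
  have "m E \<le> m (E \<union> N')"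
    using m E N' unfolding monotone_measure_def by (meson Un_upper1 sets.Un)
  with 1 show "m (E \<union> N') = m E" by (rule antisym)
qed

theorem proposition3p20:
  fixes M :: "'a measure" and \<mu> :: "real \<Rightarrow> 'a set \<Rightarrow> ennreal"
    and f :: "'a \<Rightarrow> real" and t :: real
  assumes mono: "\<And>s. 0 \<le> s \<Longrightarrow> monotone_measure M (\<mu> s)"
    and cfb: "\<And>s. 0 < s \<Longrightarrow> continuous_from_below M (\<mu> s)"
    and t_pos: "0 < t"
    and fF: "f \<in> F_class M"
    and f_nz: "\<exists>x\<in>space M. f x \<noteq> 0"
  shows "(SUP E \<in> {E \<in> sets M. ess_A M (\<mu> t) f E \<ge> ennreal t}. \<mu> t E)
           = \<mu> t {x \<in> space M. f x \<ge> t}"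
proof -
  define S where "S = {x \<in> space M. f x \<ge> t}"
  have fm: "f \<in> borel_measurable M" and fpos: "\<And>x. x \<in> space M \<Longrightarrow> 0 \<le> f x"
    using fF by (auto simp: F_class_def)
  have m: "monotone_measure M (\<mu> t)" using mono t_pos by simp
  have c: "continuous_from_below M (\<mu> t)" using cfb t_pos by simp
  have SM: "S \<in> sets M" unfolding S_def using fm by measurable
  have sub: "\<And>E a. E \<in> sets M \<Longrightarrow> {x\<in>E. f x < a} \<in> sets M"
  proof -
    fix E a assume E: "E \<in> sets M"
    have "{x\<in>space M. f x < a} \<in> sets M" using fm by measurable
    hence "E \<inter> {x\<in>space M. f x < a} \<in> sets M" using E by auto
    moreover have "E \<inter> {x\<in>space M. f x < a} = {x\<in>E. f x < a}"
      using sets.sets_into_space[OF E] by auto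
    ultimately show "{x\<in>E. f x < a} \<in> sets M" by simp
  qed
  have emp: "{} \<in> null_sets_mm M (\<mu> t)" by (simp add: null_sets_mm_def)
  have le: "\<mu> t E \<le> \<mu> t S" if E: "E \<in> sets M" and A: "ess_A M (\<mu> t) f E \<ge> ennreal t" for E
  proof (cases "E = {}")
    case True
    then show ?thesis using m by (simp add: monotone_measure_def)
  next
    case False
    have Esp: "E \<subseteq> space M" using sets.sets_into_space[OF E] .
    have nullA: "{x\<in>E. f x < a} \<in> null_sets_mm M (\<mu> t)" if "a < t" for a
    proof (cases "a < 0")
      case True
      then have "{x\<in>E. f x < a} = {}" using Esp fpos by force
      then show ?thesis using emp by metis
    next
      case False
      have "ennreal a < ennreal t" using False \<open>a < t\<close> by (simp add: ennreal_less_iff)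
      also have "\<dots> \<le> Sup {ennreal a | a. 0 \<le> a \<and> {x\<in>E. f x < a} \<in> null_sets_mm M (\<mu> t)}"
        using A \<open>E \<noteq> {}\<close> by (simp add: ess_A_def)
      finally obtain y where "y \<in> {ennreal a | a. 0 \<le> a \<and> {x\<in>E. f x < a} \<in> null_sets_mm M (\<mu> t)}"
        and "ennreal a < y" by (auto simp: less_Sup_iff)
      then obtain a' where a': "0 \<le> a'" "{x\<in>E. f x < a'} \<in> null_sets_mm M (\<mu> t)"
        and "ennreal a < ennreal a'" by auto
      then have "a < a'" using False by (simp add: ennreal_less_iff)
      then show ?thesis
        by (intro null_sub[OF m a'(2) sub[OF E]]) auto
    qed
    define N where "N n = {x\<in>E. f x < t - 1 / real (Suc n)}" for n
    have Nn: "N n \<in> null_sets_mm M (\<mu> t)" for n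
      unfolding N_def by (rule nullA) simp
    have eq: "\<mu> t (S \<union> N n) = \<mu> t S" for n
      using Nn[of n] SM by (simp add: null_sets_mm_def)
    have rng: "range (\<lambda>n. S \<union> N n) \<subseteq> sets M"
      using SM sub[OF E] by (auto simp: N_def)
    have inc: "incseq (\<lambda>n. S \<union> N n)"
    proof (rule incseq_SucI)
      fix n
      have "1 / real (Suc (Suc n)) \<le> 1 / real (Suc n)"
        by (simp add: frac_le)
      then show "S \<union> N n \<subseteq> S \<union> N (Suc n)" unfolding N_def by auto
    qed
    have "(\<lambda>n. \<mu> t (S \<union> N n)) \<longlonglongrightarrow> \<mu> t (\<Union>n. S \<union> N n)"
      using c rng inc unfolding continuous_from_below_def by blast
    then have "(\<lambda>n. \<mu> t S) \<longlonglongrightarrow> \<mu> t (\<Union>n. S \<union> N n)" using eq by simp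
    then have U: "\<mu> t (\<Union>n. S \<union> N n) = \<mu> t S"
      using LIMSEQ_unique tendsto_const by blast
    have "E \<subseteq> (\<Union>n. S \<union> N n)"
    proof
      fix x assume x: "x \<in> E"
      show "x \<in> (\<Union>n. S \<union> N n)"
      proof (cases "f x \<ge> t")
        case True then show ?thesis using x Esp by (auto simp: S_def)
      next
        case False
        then obtain k where k: "k > 0" "inverse (real k) < t - f x"
          using ex_inverse_of_nat_less[of "t - f x"] by auto
        then have "Suc (k - 1) = k" by simp
        then have "x \<in> N (k - 1)" using x k by (auto simp: N_def field_simps)
        then show ?thesis by auto
      qed
    qed
    moreover have "(\<Union>n. S \<union> N n) \<in> sets M" using sets.countable_UN[OF rng] by simp
    ultimately have "\<mu> t E \<le> \<mu> t (\<Union>n. S \<union> N n)"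
      using m E unfolding monotone_measure_def by blast
    then show ?thesis using U by simp
  qed
  have SA: "ess_A M (\<mu> t) f S \<ge> ennreal t"
  proof (cases "S = {}")
    case True then show ?thesis by (simp add: ess_A_def)
  next
    case False
    have "{x\<in>S. f x < t} = {}" by (auto simp: S_def)
    then have e: "{x\<in>S. f x < t} \<in> null_sets_mm M (\<mu> t)" using emp by metis
    then have "ennreal t \<in> {ennreal a | a. 0 \<le> a \<and> {x\<in>S. f x < a} \<in> null_sets_mm M (\<mu> t)}"
      using t_pos e by (intro CollectI exI[of _ t]) (simp add: less_imp_le)
    then show ?thesis using False by (simp add: ess_A_def Sup_upper)
  qed
  show ?thesis unfolding S_def[symmetric]
  proof (rule antisym)
    show "(SUP E \<in> {E \<in> sets M. ess_A M (\<mu> t) f E \<ge> ennreal t}. \<mu> t E) \<le> \<mu> t S"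
      using le by (auto intro: SUP_least)
    show "\<mu> t S \<le> (SUP E \<in> {E \<in> sets M. ess_A M (\<mu> t) f E \<ge> ennreal t}. \<mu> t E)"
      using SM SA by (auto intro: SUP_upper)
  qed
qed

end
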